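(* There is an absolute constant $C$ such that the following holds. Let $f\ge 1$ and let $G$ be a simple graph on $n>10f$ vertices and $m$ edges, with some ordering of its edges, that admits an $f$-MFD blocking set. Then $m\le C\, fn\log(n/f)$. In particular, for every simple $n$-vertex graph $G$ with $n>10f$ and every edge ordering, the output $H$ of the greedy algorithm $\mathsf{FTGreedyMFDCertificate}(G,f)$ has at most $C\, fn\log(n/f)$ edges.
   Context: For a graph $G=(V,E)$ and $F\subseteq V\cup E$, $G-F$ is obtained by deleting the vertices of $F\cap V$ (with incident edges) and the edges of $F\cap E$. $F$ damages an edge $e$ if $e$ is not an edge of $G-F$. For $v\in V$ let $\deg_G(v,F)=|\{u\in N_G(v): u\in F\text{ or }\{u,v\}\in F\}|$ and $\deg_G(F)=\max_{v\in V\setminus F}\deg_G(v,F)$. Given ordered edges $e_1,\dots,e_m$ with $e_i=\{u_i,v_i\}$, let $G_{<i}=(V,\{e_1,\dots,e_{i-1}\})$. An $f$-MFD blocking set for $G$ is a collection $\{(e_i,F_i)\}_{i=1}^m$ with $F_i\subseteq V\cup E$ such that (1) $F_i$ does not damage $e_i$, (2) $u_i,v_i$ are disconnected in $G_{<i}-F_i$, and (3) $\deg_G(F_i)\le f$. The algorithm $\mathsf{FTGreedyMFDCertificate}(G,f)$: start with $H=(V,\emptyset)$; for $i=1,\dots,m$, if there exists $F\subseteq V\cup E$ with $\deg_G(F)\le f$ that does not damage $e_i$ such that $u_i$ and $v_i$ are disconnected in $H-F$, add $e_i$ to $H$; return $H$. Logarithms are base 2. *)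

theory Defs
  imports Complex_Main
begin

text \<open>A simple graph with an edge ordering: a finite vertex set V and a list es of
  distinct 2-element subsets of V (the i-th list entry is the edge e_(i+1)).
  A fault set F \<subseteq> V \<union> E is represented by a pair (FV, FE) with FV \<subseteq> V, FE \<subseteq> E.\<close>

definition simple_graph :: "'a set \<Rightarrow> 'a set list \<Rightarrow> bool" where
  "simple_graph V es \<longleftrightarrow> finite V \<and> distinct es \<and> (\<forall>e\<in>set es. e \<subseteq> V \<and> card e = 2)"

definition del_edges :: "'a set set \<Rightarrow> 'a set \<Rightarrow> 'a set set \<Rightarrow> 'a set set" where
  "del_edges E FV FE = {e \<in> E. e \<inter> FV = {} \<and> e \<notin> FE}"

definition damages :: "'a set \<Rightarrow> 'a set set \<Rightarrow> 'a set \<Rightarrow> bool" where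
  "damages FV FE e \<longleftrightarrow> e \<inter> FV \<noteq> {} \<or> e \<in> FE"

definition connected_in :: "'a set set \<Rightarrow> 'a \<Rightarrow> 'a \<Rightarrow> bool" where
  "connected_in E x y \<longleftrightarrow> (x, y) \<in> {(a, b). {a, b} \<in> E}\<^sup>*"

definition fault_deg :: "'a set set \<Rightarrow> 'a set \<Rightarrow> 'a set set \<Rightarrow> 'a \<Rightarrow> nat" where
  "fault_deg E FV FE v = card {u. {u, v} \<in> E \<and> (u \<in> FV \<or> {u, v} \<in> FE)}"

definition valid_fault :: "'a set \<Rightarrow> 'a set set \<Rightarrow> 'a set \<Rightarrow> 'a set set \<Rightarrow> nat \<Rightarrow> bool" where
  "valid_fault V E FV FE f \<longleftrightarrow> FV \<subseteq> V \<and> FE \<subseteq> E \<and> (\<forall>v\<in>V - FV. fault_deg E FV FE v \<le> f)"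

definition is_MFD_blocking_set ::
  "'a set \<Rightarrow> 'a set list \<Rightarrow> nat \<Rightarrow> (nat \<Rightarrow> 'a set \<times> 'a set set) \<Rightarrow> bool" where
  "is_MFD_blocking_set V es f Fs \<longleftrightarrow>
     (\<forall>i < length es. valid_fault V (set es) (fst (Fs i)) (snd (Fs i)) f
        \<and> \<not> damages (fst (Fs i)) (snd (Fs i)) (es ! i)
        \<and> (\<forall>x y. es ! i = {x, y} \<longrightarrow>
              \<not> connected_in (del_edges (set (take i es)) (fst (Fs i)) (snd (Fs i))) x y))"

definition admits_MFD_blocking_set :: "'a set \<Rightarrow> 'a set list \<Rightarrow> nat \<Rightarrow> bool" where
  "admits_MFD_blocking_set V es f \<longleftrightarrow> (\<exists>Fs. is_MFD_blocking_set V es f Fs)"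

definition greedy_step :: "'a set \<Rightarrow> 'a set set \<Rightarrow> nat \<Rightarrow> 'a set \<Rightarrow> 'a set list \<Rightarrow> 'a set list" where
  "greedy_step V E f e H =
     (if \<exists>FV FE. valid_fault V E FV FE f \<and> \<not> damages FV FE e
                \<and> (\<forall>x y. e = {x, y} \<longrightarrow> \<not> connected_in (del_edges (set H) FV FE) x y)
      then H @ [e] else H)"

definition FTGreedyMFDCertificate :: "'a set \<Rightarrow> 'a set list \<Rightarrow> nat \<Rightarrow> 'a set list" where
  "FTGreedyMFDCertificate V es f = fold (greedy_step V (set es) f) es []"

end

theory Submission
  imports Defs
begin


definition blk_at :: "'a set \<Rightarrow> 'a set set \<Rightarrow> 'a set list \<Rightarrow> nat \<Rightarrow> nat \<Rightarrow> bool" where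
  "blk_at V E L f i \<longleftrightarrow> (\<exists>FV FE. valid_fault V E FV FE f \<and> \<not> damages FV FE (L!i)
        \<and> (\<forall>x y. L!i = {x,y} \<longrightarrow> \<not> connected_in (del_edges (set (take i L)) FV FE) x y))"

definition blocking :: "'a set \<Rightarrow> 'a set set \<Rightarrow> 'a set list \<Rightarrow> nat \<Rightarrow> bool" where
  "blocking V E L f \<longleftrightarrow> finite V \<and> finite E \<and> set L \<subseteq> E \<and> (\<forall>e\<in>E. e \<subseteq> V \<and> card e = 2)
     \<and> (\<forall>i<length L. blk_at V E L f i)"

definition sdeg :: "'a set list \<Rightarrow> 'a set \<Rightarrow> 'a \<Rightarrow> nat" where
  "sdeg L S v = card {u\<in>S. {u,v} \<in> set L}"

lemma conn_sym: "connected_in E a b \<Longrightarrow> connected_in E b a"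
proof -
  have "sym {(a, b). {a, b} \<in> E}" by (auto simp: sym_def insert_commute)
  then have "sym (({(a, b). {a, b} \<in> E})\<^sup>*)" by (rule sym_rtrancl)
  then show "connected_in E a b \<Longrightarrow> connected_in E b a"
    unfolding connected_in_def by (auto simp: sym_def)
qed

lemma conn_mono: "E \<subseteq> E' \<Longrightarrow> connected_in E a b \<Longrightarrow> connected_in E' a b"
  unfolding connected_in_def
  using rtrancl_mono[of "{(a,b). {a,b}\<in>E}" "{(a,b). {a,b}\<in>E'}"] by blast

lemma conn_trans: "connected_in E a b \<Longrightarrow> connected_in E b c \<Longrightarrow> connected_in E a c"
  unfolding connected_in_def by (rule rtrancl_trans)

lemma side:
  assumes bl: "blocking V E L f" and SV: "S \<subseteq> V"
  and j: "j < length L" "L!j \<subseteq> S" and jmax: "\<forall>i<length L. L!i \<subseteq> S \<longrightarrow> i \<le> j"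
  and Fv: "\<forall>v\<in>V-FV. fault_deg E FV FE v \<le> f" and nd: "\<not> damages FV FE (L!j)"
  and xy: "L!j = {x,y}" and z: "z \<in> L!j"
  and RS: "RS = {e \<in> del_edges (set (take j L)) FV FE. e \<subseteq> S}"
  and A: "A = {a. connected_in RS z a}"
  shows "A \<subseteq> S" "z \<in> A" "\<forall>a\<in>A. sdeg L S a \<le> sdeg L A a + f + 2"
proof -
  have zS: "z \<in> S" using j z by blast
  have zF: "z \<notin> FV" using nd z unfolding damages_def by blast
  have inv: "a \<in> S \<and> a \<notin> FV" if "connected_in RS z a" for a
    using that unfolding connected_in_def
  proof (induction rule: rtrancl_induct)
    case base then show ?case using zS zF by simp
  next
    case (step b c) then show ?case by (auto simp: RS del_edges_def)
  qed
  show "A \<subseteq> S" using inv A by blast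
  show "z \<in> A" using A unfolding connected_in_def by simp
  have finE: "finite E" and LE: "set L \<subseteq> E" and Ecard: "\<forall>e\<in>E. e \<subseteq> V \<and> card e = 2"
    and finV: "finite V"
    using bl unfolding blocking_def by auto
  show "\<forall>a\<in>A. sdeg L S a \<le> sdeg L A a + f + 2"
  proof
    fix a assume aA: "a \<in> A"
    then have ca: "connected_in RS z a" using A by simp
    have aS: "a \<in> S" and aF: "a \<notin> FV" using inv ca by auto
    have aV: "a \<in> V" using aS SV by blast
    define N where "N = {u\<in>S. {u,a} \<in> set L}"
    define Flt where "Flt = {u. {u,a} \<in> E \<and> (u \<in> FV \<or> {u,a} \<in> FE)}"
    define NA where "NA = {u\<in>A. {u,a} \<in> set L}"
    have sub: "N \<subseteq> {x,y} \<union> Flt \<union> NA"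
    proof
      fix u assume uN: "u \<in> N"
      then have uS: "u \<in> S" and uL: "{u,a} \<in> set L" using N_def by auto
      then obtain i where i: "i < length L" "L!i = {u,a}" by (auto simp: in_set_conv_nth)
      then have "L!i \<subseteq> S" using uS aS by auto
      then have ij: "i \<le> j" using jmax i by blast
      show "u \<in> {x,y} \<union> Flt \<union> NA"
      proof (cases "i = j")
        case True then show ?thesis using xy i by auto
      next
        case False
        then have "i < j" using ij by simp
        then have tk: "{u,a} \<in> set (take j L)" using i
          by (metis in_set_conv_nth length_take min.strict_order_iff nth_take j(1) min_def)
        show ?thesis
        proof (cases "u \<in> FV \<or> {u,a} \<in> FE")
          case True then show ?thesis using uL LE Flt_def by auto
        next
          case False
          then have "{u,a} \<in> RS" using tk aF uS aS by (auto simp: RS del_edges_def)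
          then have "(a,u) \<in> {(a, b). {a, b} \<in> RS}" by (auto simp: insert_commute)
          then have "connected_in RS z u" using ca unfolding connected_in_def
            by (rule rtrancl_into_rtrancl[rotated])
          then show ?thesis using uL A NA_def by auto
        qed
      qed
    qed
    have "\<forall>e\<in>E. finite e" using Ecard by (metis card.infinite zero_neq_numeral)
    then have "finite (\<Union>E)" using finE by blast
    moreover have "Flt \<subseteq> \<Union>E" unfolding Flt_def by blast
    ultimately have finF: "finite Flt" using finite_subset by blast
    have "NA \<subseteq> V" using \<open>A \<subseteq> S\<close> SV unfolding NA_def by blast
    then have finNA: "finite NA" using finV finite_subset by blast
    have cF: "card Flt \<le> f" using Fv aV aF unfolding fault_deg_def Flt_def by auto
    have "card N \<le> card ({x,y} \<union> Flt \<union> NA)"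
      using sub finF finNA by (intro card_mono) auto
    also have "\<dots> \<le> card {x,y} + card Flt + card NA"
      by (meson add_le_mono card_Un_le le_refl order_trans)
    also have "card {x,y} \<le> 2" by (simp add: card_insert_le_m1)
    finally show "sdeg L S a \<le> sdeg L A a + f + 2"
      unfolding sdeg_def N_def NA_def using cF by linarith
  qed
qed



lemma grow:
  assumes bl: "blocking V E L f"
  shows "S \<subseteq> V \<Longrightarrow> S \<noteq> {} \<Longrightarrow> (\<forall>v\<in>S. sdeg L S v \<ge> k*(f+2)+f+2) \<Longrightarrow> card S \<ge> 2^k*(f+1)"
proof (induction k arbitrary: S)
  case 0
  then obtain v where v: "v \<in> S" "sdeg L S v \<ge> f+2" by auto
  have finS: "finite S" using finite_subset[OF 0(1)] bl unfolding blocking_def by simp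
  have "sdeg L S v \<le> card S" unfolding sdeg_def using finS by (intro card_mono) auto
  then show ?case using v by simp
next
  case (Suc k S)
  have finS: "finite S" using finite_subset[OF Suc.prems(1)] bl unfolding blocking_def by simp
  obtain v where v: "v \<in> S" using Suc by auto
  then have "sdeg L S v \<ge> Suc k*(f+2)+f+2" by (rule bspec[OF Suc.prems(3)])
  then have "sdeg L S v \<ge> 1" by simp
  then have "{u\<in>S. {u,v} \<in> set L} \<noteq> {}" unfolding sdeg_def by (intro notI) simp
  then obtain u where u: "u \<in> S" "{u,v} \<in> set L" by auto
  then obtain i0 where i0: "i0 < length L" "L!i0 = {u,v}" by (auto simp: in_set_conv_nth)
  define J where "J = {i. i < length L \<and> L!i \<subseteq> S}"
  have finJ: "finite J" unfolding J_def by (rule finite_subset[of _ "{..<length L}"]) auto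
  have "i0 \<in> J" using i0 u v unfolding J_def by auto
  then have J0: "J \<noteq> {}" by auto
  define j where "j = Max J"
  have jJ: "j \<in> J" unfolding j_def by (rule Max_in[OF finJ J0])
  then have j: "j < length L" "L!j \<subseteq> S" unfolding J_def by auto
  have "\<forall>i\<in>J. i \<le> j" unfolding j_def using Max_ge[OF finJ] by blast
  then have jmax: "\<forall>i<length L. L!i \<subseteq> S \<longrightarrow> i \<le> j" unfolding J_def by blast
  obtain FV FE where vf: "valid_fault V E FV FE f" and nd: "\<not> damages FV FE (L!j)"
    and dc: "\<forall>x y. L!j = {x,y} \<longrightarrow> \<not> connected_in (del_edges (set (take j L)) FV FE) x y"
    using bl j unfolding blocking_def blk_at_def by blast
  have Fv: "\<forall>v\<in>V-FV. fault_deg E FV FE v \<le> f" using vf unfolding valid_fault_def by blast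
  have "card (L!j) = 2" using bl j nth_mem unfolding blocking_def by blast
  then obtain x y where xy: "L!j = {x,y}" "x \<noteq> y" by (meson card_2_iff)
  define RS where "RS = {e \<in> del_edges (set (take j L)) FV FE. e \<subseteq> S}"
  define A where "A = {a. connected_in RS x a}"
  define B where "B = {a. connected_in RS y a}"
  note sA = side[OF bl Suc.prems(1) j jmax Fv nd xy(1) _ RS_def A_def]
  note sB = side[OF bl Suc.prems(1) j jmax Fv nd xy(1) _ RS_def B_def]
  have AS: "A \<subseteq> S" "x \<in> A" "\<forall>a\<in>A. sdeg L S a \<le> sdeg L A a + f + 2" using sA xy by auto
  have BS: "B \<subseteq> S" "y \<in> B" "\<forall>a\<in>B. sdeg L S a \<le> sdeg L B a + f + 2" using sB xy by auto
  have RSsub: "RS \<subseteq> del_edges (set (take j L)) FV FE" unfolding RS_def by blast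
  have disj: "A \<inter> B = {}"
  proof (rule ccontr)
    assume "A \<inter> B \<noteq> {}"
    then obtain w where "connected_in RS x w" "connected_in RS y w" unfolding A_def B_def by auto
    then have c1: "connected_in (del_edges (set (take j L)) FV FE) x w"
      and c2: "connected_in (del_edges (set (take j L)) FV FE) y w" using conn_mono[OF RSsub] by auto
    have "connected_in (del_edges (set (take j L)) FV FE) x y" using conn_trans[OF c1 conn_sym[OF c2]] .
    then show False using dc xy by blast
  qed
  have degA: "\<forall>a\<in>A. sdeg L A a \<ge> k*(f+2)+f+2"
  proof
    fix a assume a: "a \<in> A"
    then have "sdeg L S a \<ge> Suc k*(f+2)+f+2" using Suc.prems AS by blast
    moreover have "sdeg L S a \<le> sdeg L A a + f + 2" using AS(3) a by blast
    moreover have "Suc k*(f+2)+f+2 = (k*(f+2)+f+2) + (f+2)" by simp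
    ultimately show "sdeg L A a \<ge> k*(f+2)+f+2" by linarith
  qed
  have degB: "\<forall>a\<in>B. sdeg L B a \<ge> k*(f+2)+f+2"
  proof
    fix a assume a: "a \<in> B"
    then have "sdeg L S a \<ge> Suc k*(f+2)+f+2" using Suc.prems BS by blast
    moreover have "sdeg L S a \<le> sdeg L B a + f + 2" using BS(3) a by blast
    moreover have "Suc k*(f+2)+f+2 = (k*(f+2)+f+2) + (f+2)" by simp
    ultimately show "sdeg L B a \<ge> k*(f+2)+f+2" by linarith
  qed
  have cA: "card A \<ge> 2^k*(f+1)" using Suc.IH[of A] AS Suc.prems degA by blast
  have cB: "card B \<ge> 2^k*(f+1)" using Suc.IH[of B] BS Suc.prems degB by blast
  have finA: "finite A" using finS AS(1) finite_subset by blast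
  have finB: "finite B" using finS BS(1) finite_subset by blast
  have "card A + card B = card (A \<union> B)" using card_Un_disjoint[OF finA finB disj] by simp
  also have "\<dots> \<le> card S" using AS BS finS by (intro card_mono) auto
  finally show ?case using cA cB by simp
qed

lemma peel:
  assumes finV: "finite V" and c2: "\<forall>e\<in>set L. card e = 2"
    and deg: "\<forall>S\<subseteq>V. S\<noteq>{} \<longrightarrow> (\<exists>v\<in>S. sdeg L S v \<le> M)"
  shows "S \<subseteq> V \<Longrightarrow> card {e\<in>set L. e \<subseteq> S} \<le> M * card S"
proof (induction "card S" arbitrary: S rule: less_induct)
  case less
  show ?case
  proof (cases "S = {}")
    case True
    have "{e\<in>set L. e \<subseteq> S} = {}"
    proof (rule ccontr)
      assume "{e\<in>set L. e \<subseteq> S} \<noteq> {}"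
      then obtain e where "e \<in> set L" "e \<subseteq> S" by blast
      then have "e = {}" "card e = 2" using True c2 by auto
      then show False by simp
    qed
    then show ?thesis by (metis card.empty zero_le)
  next
    case False
    then obtain v where v: "v \<in> S" "sdeg L S v \<le> M" using deg less.prems by blast
    have finS: "finite S" using less.prems finV finite_subset by blast
    have sub: "{e\<in>set L. e \<subseteq> S} \<subseteq> {e\<in>set L. e \<subseteq> S-{v}} \<union> (\<lambda>u. {u,v}) ` {u\<in>S. {u,v}\<in>set L}"
    proof
      fix e assume e: "e \<in> {e\<in>set L. e \<subseteq> S}"
      show "e \<in> {e\<in>set L. e \<subseteq> S-{v}} \<union> (\<lambda>u. {u,v}) ` {u\<in>S. {u,v}\<in>set L}"
      proof (cases "v \<in> e")
        case False then show ?thesis using e by auto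
      next
        case True
        have "card e = 2" using c2 e by blast
        then obtain a b where ab: "e = {a,b}" by (meson card_2_iff)
        show ?thesis
        proof (cases "v = a")
          case True
          then have "e = {b,v}" using ab by auto
          then show ?thesis using e by auto
        next
          case False
          then have "v = b" using ab \<open>v \<in> e\<close> by auto
          then show ?thesis using e ab by auto
        qed
      qed
    qed
    have c1: "card {e\<in>set L. e \<subseteq> S} \<le> card {e\<in>set L. e \<subseteq> S-{v}} + card ((\<lambda>u. {u,v}) ` {u\<in>S. {u,v}\<in>set L})"
      by (rule order_trans[OF card_mono[OF _ sub] card_Un_le]) (use finS in auto)
    have c2: "card ((\<lambda>u. {u,v}) ` {u\<in>S. {u,v}\<in>set L}) \<le> M"
      using card_image_le[of "{u\<in>S. {u,v}\<in>set L}" "\<lambda>u. {u,v}"] finS v unfolding sdeg_def by auto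
    have c3: "card {e\<in>set L. e \<subseteq> S-{v}} \<le> M * card (S-{v})"
    proof -
      have "card (S-{v}) < card S" using finS v(1) by (rule card_Diff1_less)
      moreover have "S-{v} \<subseteq> V" using less.prems by blast
      ultimately show ?thesis using less.hyps by blast
    qed
    have c4: "card (S-{v}) = card S - 1" using finS v(1) by simp
    have "card S \<ge> 1" using finS v(1) by (metis One_nat_def Suc_leI card_gt_0_iff empty_iff)
    then have c5: "M * (card S - 1) + M = M * card S" by (cases "card S") auto
    have c6: "card {e\<in>set L. e \<subseteq> S-{v}} \<le> M * (card S - 1)" using c3 c4 by simp
    show ?thesis using c1 c2 c6 c5 by linarith
  qed
qed



lemma take_mem: "i < j \<Longrightarrow> j \<le> length L \<Longrightarrow> L!i \<in> set (take j L)"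
proof -
  assume a: "i < j" "j \<le> length L"
  then have "take j L ! i = L ! i" by simp
  moreover have "i < length (take j L)" using a by simp
  ultimately show ?thesis by (metis nth_mem)
qed

lemma blk_distinct:
  assumes bl: "blocking V E L f" shows "distinct L"
proof -
  have nin: "L!i \<notin> set (take i L)" if i: "i<length L" for i
  proof
    assume inn: "L!i \<in> set (take i L)"
    obtain FV FE where nd: "\<not> damages FV FE (L!i)"
      and dc: "\<forall>x y. L!i = {x,y} \<longrightarrow> \<not> connected_in (del_edges (set (take i L)) FV FE) x y"
      using bl i unfolding blocking_def blk_at_def by blast
    have "card (L!i) = 2" using bl i nth_mem unfolding blocking_def by blast
    then obtain x y where xy: "L!i = {x,y}" by (meson card_2_iff)
    have "L!i \<in> del_edges (set (take i L)) FV FE" using inn nd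
      unfolding del_edges_def damages_def by blast
    then have "(x,y) \<in> {(a,b). {a,b} \<in> del_edges (set (take i L)) FV FE}" using xy by simp
    then have "connected_in (del_edges (set (take i L)) FV FE) x y"
      unfolding connected_in_def by (rule r_into_rtrancl)
    then show False using dc xy by blast
  qed
  show ?thesis unfolding distinct_conv_nth
  proof (intro allI impI)
    fix i j assume ij: "i < length L" "j < length L" "i \<noteq> j"
    show "L!i \<noteq> L!j"
    proof (cases "i < j")
      case True
      then have "L!i \<in> set (take j L)" using ij take_mem[of i j L] by simp
      then show ?thesis using nin[OF ij(2)] by metis
    next
      case False
      then have "j < i" using ij by simp
      then have "L!j \<in> set (take i L)" using ij take_mem[of j i L] by simp
      then show ?thesis using nin[OF ij(1)] by metis
    qed
  qed
qed

lemma bound: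
  assumes bl: "blocking V E L f" and f1: "f \<ge> 1" and nV: "card V > 10*f"
  shows "real (length L) \<le> 6 * real f * real (card V) * log 2 (real (card V) / real f)"
proof -
  define n where "n = card V"
  define r where "r = real n / real f"
  have fpos: "real f > 0" using f1 by simp
  have "real (10*f) < real n" using nV unfolding n_def by (simp only: of_nat_less_iff)
  then have "real n > 10 * real f" by simp
  then have r10: "r > 10" unfolding r_def using fpos by (simp add: field_simps)
  have l4: "log 2 (4::real) = 2" using log_nat_power[of 2 2 2] by simp
  have lg2: "log 2 r \<ge> 2"
  proof -
    have "log 2 4 \<le> log 2 r" using r10 by (subst log_le_cancel_iff) auto
    then show ?thesis using l4 by simp
  qed
  define K where "K = nat \<lceil>log 2 r\<rceil>"
  have Kr: "real K = of_int \<lceil>log 2 r\<rceil>" unfolding K_def using lg2 by simp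
  have K1: "real K \<le> log 2 r + 1" using Kr ceiling_correct[of "log 2 r"] by linarith
  have K2: "real K \<ge> log 2 r" using Kr le_of_int_ceiling by simp
  have "(2::real) ^ K = 2 powr real K" by (simp add: powr_realpow)
  also have "\<dots> \<ge> 2 powr log 2 r" using K2 by (intro powr_mono) auto
  also have "2 powr log 2 r = r" using r10 by simp
  finally have pK: "real (2^K) \<ge> r" by simp
  have "real (2^K) * real f \<ge> r * real f" using pK fpos by (intro mult_right_mono) auto
  then have "real (2^K * f) \<ge> real n" unfolding r_def using fpos by simp
  then have "2^K * f \<ge> n" by linarith
  moreover have "(2::nat)^K \<ge> 1" by simp
  moreover have "(2::nat)^K*(f+1) = 2^K*f + 2^K" by (simp add: algebra_simps)
  ultimately have big: "2^K * (f+1) > n" by linarith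
  define M where "M = K*(f+2)+f+1"
  have finV: "finite V" and c2: "\<forall>e\<in>set L. card e = 2" and LV: "\<forall>e\<in>set L. e \<subseteq> V"
    using bl unfolding blocking_def by auto
  have deg: "\<forall>S\<subseteq>V. S\<noteq>{} \<longrightarrow> (\<exists>v\<in>S. sdeg L S v \<le> M)"
  proof (intro allI impI)
    fix S assume S: "S \<subseteq> V" "S \<noteq> {}"
    show "\<exists>v\<in>S. sdeg L S v \<le> M"
    proof (rule ccontr)
      assume "\<not> (\<exists>v\<in>S. sdeg L S v \<le> M)"
      then have "\<forall>v\<in>S. sdeg L S v \<ge> K*(f+2)+f+2" unfolding M_def by auto
      then have "card S \<ge> 2^K*(f+1)" using grow[OF bl S] by blast
      moreover have "card S \<le> n" unfolding n_def using S finV by (simp add: card_mono)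
      ultimately show False using big by simp
    qed
  qed
  have "card {e\<in>set L. e \<subseteq> V} \<le> M * card V" using peel[OF finV c2 deg] by blast
  moreover have "{e\<in>set L. e \<subseteq> V} = set L" using LV by blast
  moreover have "length L = card (set L)" using blk_distinct[OF bl] by (simp add: distinct_card)
  ultimately have lm: "length L \<le> M * n" unfolding n_def by simp
  have "real M \<le> (real K + 1) * (3 * real f)"
  proof -
    have "M \<le> (K+1)*(f+2)" unfolding M_def by simp
    also have "\<dots> \<le> (K+1)*(3*f)" using f1 by (intro mult_le_mono2) simp
    finally have "real M \<le> real ((K+1)*(3*f))" by (simp only: of_nat_le_iff)
    then show ?thesis by (simp add: algebra_simps)
  qed
  also have "\<dots> \<le> (2 * log 2 r) * (3 * real f)" using K1 lg2 fpos by (intro mult_right_mono) auto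
  finally have "real M \<le> 6 * real f * log 2 r" by (simp add: algebra_simps)
  then have "real M * real n \<le> (6 * real f * log 2 r) * real n" by (intro mult_right_mono) auto
  moreover have "real (length L) \<le> real (M * n)" using lm by (simp only: of_nat_le_iff)
  then have "real (length L) \<le> real M * real n" by simp
  ultimately have fin: "real (length L) \<le> 6 * real f * log 2 r * real n" by linarith
  have eq: "6 * real f * log 2 r * real n = 6 * real f * real (card V) * log 2 (real (card V) / real f)"
    unfolding r_def n_def by (simp only: ac_simps)
  show ?thesis using fin eq by linarith
qed

lemma blk_append:
  assumes "\<forall>i<length H. blk_at V E H f i"
    and "\<exists>FV FE. valid_fault V E FV FE f \<and> \<not> damages FV FE a
                \<and> (\<forall>x y. a = {x, y} \<longrightarrow> \<not> connected_in (del_edges (set H) FV FE) x y)"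
  shows "\<forall>i<length (H@[a]). blk_at V E (H@[a]) f i"
proof (intro allI impI)
  fix i assume i: "i < length (H@[a])"
  show "blk_at V E (H@[a]) f i"
  proof (cases "i < length H")
    case True
    then have "(H@[a])!i = H!i" "take i (H@[a]) = take i H" by (auto simp: nth_append)
    then show ?thesis using assms(1) True unfolding blk_at_def by simp
  next
    case False
    then have "i = length H" using i by simp
    then show ?thesis using assms(2) unfolding blk_at_def by simp
  qed
qed

lemma greedy_inv:
  assumes "set xs \<subseteq> set es" "set H \<subseteq> set es" "\<forall>i<length H. blk_at V (set es) H f i"
  shows "set (fold (greedy_step V (set es) f) xs H) \<subseteq> set es
    \<and> (\<forall>i<length (fold (greedy_step V (set es) f) xs H). blk_at V (set es) (fold (greedy_step V (set es) f) xs H) f i)"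
  using assms
proof (induction xs arbitrary: H)
  case Nil then show ?case by simp
next
  case (Cons a xs)
  define H' where "H' = greedy_step V (set es) f a H"
  have "set H' \<subseteq> set es \<and> (\<forall>i<length H'. blk_at V (set es) H' f i)"
  proof (cases "\<exists>FV FE. valid_fault V (set es) FV FE f \<and> \<not> damages FV FE a
                \<and> (\<forall>x y. a = {x, y} \<longrightarrow> \<not> connected_in (del_edges (set H) FV FE) x y)")
    case True
    then have "H' = H@[a]" unfolding H'_def greedy_step_def by simp
    then show ?thesis using blk_append[OF Cons.prems(3) True] Cons.prems by simp
  next
    case False
    then have "H' = H" unfolding H'_def greedy_step_def by simp
    then show ?thesis using Cons.prems by simp
  qed
  then show ?case using Cons.IH[of H'] Cons.prems unfolding H'_def by simp
qed


theorem mainTheorem4: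
  shows "\<exists>C::real.
    (\<forall>(V::'a set) es (f::nat).
       simple_graph V es \<and> f \<ge> 1 \<and> card V > 10 * f \<and> admits_MFD_blocking_set V es f \<longrightarrow>
       real (length es) \<le> C * real f * real (card V) * log 2 (real (card V) / real f))
  \<and> (\<forall>(V::'a set) es (f::nat).
       simple_graph V es \<and> f \<ge> 1 \<and> card V > 10 * f \<longrightarrow>
       real (length (FTGreedyMFDCertificate V es f))
         \<le> C * real f * real (card V) * log 2 (real (card V) / real f))"
proof (intro exI conjI allI impI)
  fix V :: "'a set" and es and f :: nat
  assume H: "simple_graph V es \<and> f \<ge> 1 \<and> card V > 10 * f \<and> admits_MFD_blocking_set V es f"
  then obtain Fs where Fs: "is_MFD_blocking_set V es f Fs" unfolding admits_MFD_blocking_set_def by blast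
  have "\<forall>i<length es. blk_at V (set es) es f i"
  proof (intro allI impI)
    fix i assume i: "i < length es"
    show "blk_at V (set es) es f i" unfolding blk_at_def
      using Fs i unfolding is_MFD_blocking_set_def by blast
  qed
  then have bl: "blocking V (set es) es f"
    using H unfolding blocking_def simple_graph_def by auto
  show "real (length es) \<le> 6 * real f * real (card V) * log 2 (real (card V) / real f)"
    using bound[OF bl] H by blast
next
  fix V :: "'a set" and es and f :: nat
  assume H: "simple_graph V es \<and> f \<ge> 1 \<and> card V > 10 * f"
  have "set (FTGreedyMFDCertificate V es f) \<subseteq> set es
    \<and> (\<forall>i<length (FTGreedyMFDCertificate V es f). blk_at V (set es) (FTGreedyMFDCertificate V es f) f i)"
    unfolding FTGreedyMFDCertificate_def by (rule greedy_inv) auto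
  then have bl: "blocking V (set es) (FTGreedyMFDCertificate V es f) f"
    using H unfolding blocking_def simple_graph_def by auto
  show "real (length (FTGreedyMFDCertificate V es f)) \<le> 6 * real f * real (card V) * log 2 (real (card V) / real f)"
    using bound[OF bl] H by blast
qed

end
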